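(* Let $(X,f)$ be a dynamical system. If $(X,f)$ is $\Delta$-transitive with respect to $(1,2)$, then $(X,f)$ is weakly mixing.
   Context: A dynamical system is a pair $(X,f)$ with $X$ a compact metric space and $f:X\to X$ continuous. For a system $(Y,g)$, a point $y$ is a transitive point if its $\omega$-limit set equals $Y$; $(Y,g)$ is transitive if for all non-empty open $U,V\subset Y$ there is $n\in\mathbb{N}$ with $U\cap g^{-n}(V)\neq\emptyset$. $(X,f)$ is weakly mixing if $(X\times X,f\times f)$ is transitive. $(X,f)$ is $\Delta$-transitive with respect to $(1,2)$ if there is $x\in X$ such that $(x,x)$ is a transitive point of $(X\times X,f\times f^2)$. *)

theory Defs
  imports "HOL-Analysis.Analysis"
begin

definition dyn_system :: "'a::metric_space set \<Rightarrow> ('a \<Rightarrow> 'a) \<Rightarrow> bool" where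
  "dyn_system X f \<longleftrightarrow> compact X \<and> continuous_on X f \<and> f ` X \<subseteq> X"

definition omega_limit :: "('a::topological_space \<Rightarrow> 'a) \<Rightarrow> 'a \<Rightarrow> 'a set" where
  "omega_limit g y = {z. \<forall>U. open U \<and> z \<in> U \<longrightarrow> (\<exists>\<^sub>F n in sequentially. (g ^^ n) y \<in> U)}"

definition transitive_point :: "'a::topological_space set \<Rightarrow> ('a \<Rightarrow> 'a) \<Rightarrow> 'a \<Rightarrow> bool" where
  "transitive_point Y g y \<longleftrightarrow> y \<in> Y \<and> omega_limit g y = Y"

definition top_transitive :: "'a::topological_space set \<Rightarrow> ('a \<Rightarrow> 'a) \<Rightarrow> bool" where
  "top_transitive Y g \<longleftrightarrow>
     (\<forall>U V. openin (top_of_set Y) U \<and> openin (top_of_set Y) V \<and> U \<noteq> {} \<and> V \<noteq> {} \<longrightarrow>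
        (\<exists>n\<ge>1. U \<inter> {x \<in> Y. (g ^^ n) x \<in> V} \<noteq> {}))"

definition weakly_mixing :: "'a::metric_space set \<Rightarrow> ('a \<Rightarrow> 'a) \<Rightarrow> bool" where
  "weakly_mixing X f \<longleftrightarrow> top_transitive (X \<times> X) (\<lambda>(x, y). (f x, f y))"

definition delta_transitive_12 :: "'a::metric_space set \<Rightarrow> ('a \<Rightarrow> 'a) \<Rightarrow> bool" where
  "delta_transitive_12 X f \<longleftrightarrow>
     (\<exists>x\<in>X. transitive_point (X \<times> X) (\<lambda>(u, v). (f u, (f ^^ 2) v)) (x, x))"

end

theory Submission
  imports Defs
begin

lemma iter12: "((\<lambda>(u, v). ((f::'a\<Rightarrow>'a) u, (f ^^ 2) v)) ^^ n) (x, y) = ((f ^^ n) x, (f ^^ (2*n)) y)"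
proof (induction n)
  case 0 then show ?case by simp
next
  case (Suc n)
  have "(f ^^ 2) ((f ^^ (2*n)) y) = (f ^^ (2*Suc n)) y"
    by (simp add: numeral_2_eq_2)
  with Suc show ?case by simp
qed

lemma iterprod: "((\<lambda>(u, v). ((f::'a\<Rightarrow>'a) u, f v)) ^^ n) (x, y) = ((f ^^ n) x, (f ^^ n) y)"
  by (induction n) auto

lemma funpow_in: "f ` X \<subseteq> X \<Longrightarrow> x \<in> X \<Longrightarrow> (f ^^ n) x \<in> X"
  by (induction n) auto

lemma funpow_cont: "continuous_on X f \<Longrightarrow> f ` X \<subseteq> X \<Longrightarrow> continuous_on X (f ^^ n)"
proof (induction n)
  case 0 then show ?case by (simp add: continuous_on_id)
next
  case (Suc n)
  have "continuous_on X (f \<circ> (f ^^ n))"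
    using continuous_on_compose2[OF Suc(2) Suc.IH[OF Suc(2,3)]] funpow_in[OF Suc(3)]
    by (auto simp: o_def)
  then show ?case by simp
qed

lemma funpow_comm: "(f ^^ a) ((f ^^ b) y) = (f ^^ b) ((f ^^ a) y)"
  by (metis add.commute comp_apply funpow_add)

lemma funpow_add_app: "(f ^^ a) ((f ^^ b) y) = (f ^^ (a + b)) y"
  by (simp add: funpow_add)

lemma preim:
  assumes "continuous_on X f" "f ` X \<subseteq> X" "open V"
  obtains W where "open W" "W \<inter> X = (f ^^ k) -` V \<inter> X"
  using funpow_cont[OF assms(1,2), of k] assms(3) unfolding continuous_on_open_invariant by blast

theorem lemma5p4:
  fixes X :: "'a::metric_space set" and f :: "'a \<Rightarrow> 'a"
  assumes "dyn_system X f"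
    and "delta_transitive_12 X f"
  shows "weakly_mixing X f"
proof -
  define F where "F = (\<lambda>k. f ^^ k)"
  have cont: "continuous_on X f" and inv: "f ` X \<subseteq> X" using assms(1) by (auto simp: dyn_system_def)
  obtain x where xX: "x \<in> X" and tp: "transitive_point (X \<times> X) (\<lambda>(u, v). (f u, (f ^^ 2) v)) (x, x)"
    using assms(2) by (auto simp: delta_transitive_12_def)
  have FX: "\<And>k y. y \<in> X \<Longrightarrow> F k y \<in> X" unfolding F_def using funpow_in[OF inv] by blast
  have delta: "\<exists>n\<ge>N. F n x \<in> A \<and> F (2*n) x \<in> B"
    if "open A" "open B" "a \<in> X \<inter> A" "b \<in> X \<inter> B" for A B a b N
  proof -
    have "(a, b) \<in> omega_limit (\<lambda>(u, v). (f u, (f ^^ 2) v)) (x, x)"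
      using tp that unfolding transitive_point_def by auto
    then have "\<exists>\<^sub>F n in sequentially. ((\<lambda>(u, v). (f u, (f ^^ 2) v)) ^^ n) (x, x) \<in> A \<times> B"
      unfolding omega_limit_def using that by (auto intro: open_Times)
    then show ?thesis unfolding frequently_sequentially iter12 F_def by auto
  qed
  have orb: "\<exists>n\<ge>N. F n x \<in> A" if "open A" "a \<in> X \<inter> A" for A a N
    using delta[OF that(1) open_UNIV that(2), of x] xX by blast
  have core: "\<exists>n\<ge>1. \<exists>p\<in>X \<inter> U1. \<exists>q\<in>X \<inter> U2. F n p \<in> V1 \<and> F n q \<in> V2"
    if o: "open U1" "open U2" "open V1" "open V2"
      and ne: "u1 \<in> X \<inter> U1" "u2 \<in> X \<inter> U2" "v1 \<in> X \<inter> V1" "v2 \<in> X \<inter> V2"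
    for U1 U2 V1 V2 u1 u2 v1 v2
  proof -
    obtain a where a: "F a x \<in> U2" using orb[OF o(2) ne(2), of 0] by blast
    obtain b where b: "b \<ge> a" "F b x \<in> U1" using orb[OF o(1) ne(1), of a] by blast
    define t where "t = b - a"
    obtain W1 where W1: "open W1" "W1 \<inter> X = F t -` U1 \<inter> X"
      using preim[OF cont inv o(1), of t] unfolding F_def by blast
    obtain W2 where W2: "open W2" "W2 \<inter> X = F t -` V2 \<inter> X"
      using preim[OF cont inv o(4), of t] unfolding F_def by blast
    have "F t (F a x) = F b x" unfolding F_def t_def funpow_add_app using b by simp
    then have aA: "F a x \<in> X \<inter> (U2 \<inter> W1)" using W1 a b FX xX by blast
    obtain s where s: "s \<ge> t" "F s x \<in> V2" using orb[OF o(4) ne(4), of t] by blast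
    have "F t (F (s - t) x) = F s x" unfolding F_def funpow_add_app using s by simp
    then have sB: "F (s - t) x \<in> X \<inter> W2" using W2 s FX xX by blast
    obtain j where j: "F j x \<in> U2 \<inter> W1" "F (2*j) x \<in> W2"
      using delta[OF open_Int[OF o(2) W1(1)] W2(1) aA sB, of 0] by blast
    define r where "r = F t (F j x)"
    have rU1: "r \<in> X \<inter> U1" using j W1 FX xX unfolding r_def by blast
    have e: "j + (t + j) = t + 2*j" by simp
    have "F j r = F t (F (2*j) x)" unfolding r_def F_def funpow_add_app e ..
    also have "\<dots> \<in> V2" using j W2 FX xX by blast
    finally have rV: "F j r \<in> V2" .
    obtain W3 where W3: "open W3" "W3 \<inter> X = F j -` V2 \<inter> X"
      using preim[OF cont inv o(4), of j] unfolding F_def by blast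
    have rB: "r \<in> X \<inter> (U1 \<inter> W3)" using rU1 rV W3 by blast
    obtain n where n: "n \<ge> 1" "F n x \<in> U1 \<inter> W3" "F (2*n) x \<in> V1"
      using delta[OF open_Int[OF o(1) W3(1)] o(3) rB ne(3), of 1] by blast
    have p: "F n x \<in> X \<inter> U1" "F n (F n x) \<in> V1"
      using n FX xX unfolding F_def funpow_add_app by (auto simp: mult_2)
    have q: "F j x \<in> X \<inter> U2" "F n (F j x) \<in> V2"
      using n j W3 FX xX unfolding F_def funpow_comm[where f=f and a=n and b=j] by blast+
    show ?thesis using n(1) p q by blast
  qed
  show ?thesis unfolding weakly_mixing_def top_transitive_def
  proof (intro allI impI)
    fix U V assume h: "openin (top_of_set (X \<times> X)) U \<and> openin (top_of_set (X \<times> X)) V \<and> U \<noteq> {} \<and> V \<noteq> {}"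
    obtain U' where U': "open U'" "U = (X \<times> X) \<inter> U'" using h openin_open by metis
    obtain V' where V': "open V'" "V = (X \<times> X) \<inter> V'" using h openin_open by metis
    obtain u1 u2 where uU: "(u1, u2) \<in> U" using h by auto
    obtain v1 v2 where vV: "(v1, v2) \<in> V" using h by auto
    obtain U1 U2 where UU: "open U1" "open U2" "(u1, u2) \<in> U1 \<times> U2" "U1 \<times> U2 \<subseteq> U'"
      using open_prod_elim[OF U'(1), of "(u1,u2)"] uU U' by blast
    obtain V1 V2 where VV: "open V1" "open V2" "(v1, v2) \<in> V1 \<times> V2" "V1 \<times> V2 \<subseteq> V'"
      using open_prod_elim[OF V'(1), of "(v1,v2)"] vV V' by blast
    obtain n p q where n: "n \<ge> 1" "p \<in> X \<inter> U1" "q \<in> X \<inter> U2" "F n p \<in> V1" "F n q \<in> V2"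
      using core[OF UU(1,2) VV(1,2), of u1 u2 v1 v2] UU VV uU vV U' V' by auto
    have "(p, q) \<in> U" using n UU U' by auto
    moreover have "((\<lambda>(x, y). (f x, f y)) ^^ n) (p, q) \<in> V"
      using n VV V' FX unfolding iterprod by (auto simp: F_def)
    ultimately show "\<exists>n\<ge>1. U \<inter> {x \<in> X \<times> X. ((\<lambda>(x, y). (f x, f y)) ^^ n) x \<in> V} \<noteq> {}"
      using n(1) n(2,3) by blast
  qed
qed

end
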